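(* Let $n\ge3$ be an odd integer. For $1\le r\le n-1$ let $T^r_n=\{(k,a,b)\in(\mathbb{R}\setminus C_n)\times\mathbb{R}\times\mathbb{R}: k\neq0,\ \mathrm{rank}(B^{(k,a,b)}_n)\le r,\ 4a^3+27b^2=0\}\setminus\{(k,0,0):k\in\mathbb{R}\}$. Then (a) $T^{n-1}_n=\{(k,a^{(n)}_{k,3},b^{(n)}_{k,3}): k\in\mathbb{R}\setminus C_n\}$; (b) the matrix $B^{(k,a,b)}_n$ has rank exactly $n-1$ for all but finitely many triples $(k,a,b)\in T^{n-1}_n$; (c) for each $1\le r\le n-2$, the matrix $B^{(k,a,b)}_n$ has rank $r$ for only finitely many triples $(k,a,b)\in T^{n-1}_n$.
   Context: For real $k,a,b$, the generalized $k$-FL sequence is $S^{(a,b)}_{k,0}=2b$, $S^{(a,b)}_{k,1}=bk+a$, $S^{(a,b)}_{k,m}=kS^{(a,b)}_{k,m-1}+S^{(a,b)}_{k,m-2}$. $B^{(k,a,b)}_n$ is the $n\times n$ circulant matrix whose $(i,j)$ entry is $S^{(a,b)}_{k,j-i+1}$ if $j\ge i$ and $S^{(a,b)}_{k,n+j-i+1}$ if $j<i$. Define $f_m,g_m\in\mathbb{Z}[T]$ by $f_0=0,f_1=1,g_0=2,g_1=T$, $f_m=Tf_{m-1}+f_{m-2}$, $g_m=Tg_{m-1}+g_{m-2}$; $P_n=f_{n+1}+f_n$, $Q_n=g_{n+1}+g_n$; $C_n=\{k\in\mathbb{R}: P_n(k)-1=0\text{ or }Q_n(k)-k-2=0\}$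 (for odd $n$, $0\in C_n$). For $k\notin C_n$, the singular $k$-FL pair of level $n$ of Type 3 is $a^{(n)}_{k,3}=-\frac{27(P_n(k)-1)^2}{4(Q_n(k)-k-2)^2}$, $b^{(n)}_{k,3}=\frac{27(P_n(k)-1)^3}{4(Q_n(k)-k-2)^3}$. The condition $4a^3+27b^2=0$ means the curve $y^2=x^3+ax+b$ is singular. *)

theory Defs
  imports "Jordan_Normal_Form.DL_Rank" "HOL-Computational_Algebra.Polynomial"
begin

fun FL :: "real \<Rightarrow> real \<Rightarrow> real \<Rightarrow> nat \<Rightarrow> real" where
  "FL k a b 0 = 2 * b"
| "FL k a b (Suc 0) = b * k + a"
| "FL k a b (Suc (Suc m)) = k * FL k a b (Suc m) + FL k a b m"

definition Bmat :: "nat \<Rightarrow> real \<Rightarrow> real \<Rightarrow> real \<Rightarrow> real mat" where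
  "Bmat n k a b = mat n n (\<lambda>(i, j). if i \<le> j then FL k a b (j - i + 1) else FL k a b (n + j - i + 1))"

definition mrank :: "real mat \<Rightarrow> nat" where
  "mrank A = vec_space.rank (dim_row A) A"

fun fpoly :: "nat \<Rightarrow> int poly" where
  "fpoly 0 = 0"
| "fpoly (Suc 0) = 1"
| "fpoly (Suc (Suc m)) = [:0, 1:] * fpoly (Suc m) + fpoly m"

fun gpoly :: "nat \<Rightarrow> int poly" where
  "gpoly 0 = [:2:]"
| "gpoly (Suc 0) = [:0, 1:]"
| "gpoly (Suc (Suc m)) = [:0, 1:] * gpoly (Suc m) + gpoly m"

definition Ppoly :: "nat \<Rightarrow> int poly" where "Ppoly n = fpoly (Suc n) + fpoly n"
definition Qpoly :: "nat \<Rightarrow> int poly" where "Qpoly n = gpoly (Suc n) + gpoly n"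

definition Pv :: "nat \<Rightarrow> real \<Rightarrow> real" where "Pv n k = poly (map_poly of_int (Ppoly n)) k"
definition Qv :: "nat \<Rightarrow> real \<Rightarrow> real" where "Qv n k = poly (map_poly of_int (Qpoly n)) k"

definition Cset :: "nat \<Rightarrow> real set" where
  "Cset n = {k. Pv n k - 1 = 0 \<or> Qv n k - k - 2 = 0}"

definition a3 :: "nat \<Rightarrow> real \<Rightarrow> real" where
  "a3 n k = - (27 * (Pv n k - 1)^2) / (4 * (Qv n k - k - 2)^2)"
definition b3 :: "nat \<Rightarrow> real \<Rightarrow> real" where
  "b3 n k = (27 * (Pv n k - 1)^3) / (4 * (Qv n k - k - 2)^3)"

definition Tset :: "nat \<Rightarrow> nat \<Rightarrow> (real \<times> real \<times> real) set" where
  "Tset n r = {(k, a, b). k \<notin> Cset n \<and> k \<noteq> 0 \<and> mrank (Bmat n k a b) \<le> r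
                 \<and> 4 * a^3 + 27 * b^2 = 0} - {(k, 0, 0) | k. True}"

end

theory Submission
  imports Defs
begin


lemma mp_add: "map_poly (of_int::int\<Rightarrow>real) (p + q) = map_poly of_int p + map_poly of_int q"
  by (rule poly_eqI) (simp add: coeff_map_poly)

lemma ev_rec: "poly (map_poly (of_int::int\<Rightarrow>real) ([:0,1:] * p + q)) x = x * poly (map_poly of_int p) x + poly (map_poly of_int q) x"
  by (simp add: mp_add map_poly_pCons)

definition fv :: "nat \<Rightarrow> real \<Rightarrow> real" where "fv m k = poly (map_poly of_int (fpoly m)) k"
definition gv :: "nat \<Rightarrow> real \<Rightarrow> real" where "gv m k = poly (map_poly of_int (gpoly m)) k"

lemma fv_simps: "fv 0 k = 0" "fv (Suc 0) k = 1" "fv (Suc (Suc m)) k = k * fv (Suc m) k + fv m k"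
    apply (simp_all add: fv_def del: fpoly.simps(3))
  unfolding fpoly.simps(3) by (rule ev_rec)

lemma gv_simps: "gv 0 k = 2" "gv (Suc 0) k = k" "gv (Suc (Suc m)) k = k * gv (Suc m) k + gv m k"
    apply (simp_all add: gv_def map_poly_pCons del: gpoly.simps(3))
  unfolding gpoly.simps(3) by (rule ev_rec)

lemma FL_lin: "FL k a b m = a * fv m k + b * gv m k"
  by (induction k a b m rule: FL.induct) (simp_all add: fv_simps gv_simps algebra_simps)

lemma Pv_eq: "Pv n k = fv (Suc n) k + fv n k"
  by (simp add: Pv_def Ppoly_def mp_add fv_def)
lemma Qv_eq: "Qv n k = gv (Suc n) k + gv n k"
  by (simp add: Qv_def Qpoly_def mp_add gv_def)

lemma fv_simps_induct: "P 0 \<Longrightarrow> P (Suc 0) \<Longrightarrow> (\<And>m. P m \<Longrightarrow> P (Suc m) \<Longrightarrow> P (Suc (Suc m))) \<Longrightarrow> P m"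
  by (induction m rule: nat_less_induct) (metis less_Suc_eq not0_implies_Suc)

lemma fv_zero: "fv m 0 = (if odd m then 1 else 0)"
  by (induction m rule: fv_simps_induct) (simp_all add: fv_simps)

lemma zero_in_C: "(0::real) \<in> Cset n"
  by (simp add: Cset_def Pv_eq fv_zero)

lemma key_lin: "a * (Pv n k - 1) + b * (Qv n k - k - 2) =
   FL k a b (Suc n) + FL k a b n - FL k a b 1 - FL k a b 0"
  by (simp add: FL_lin Pv_eq Qv_eq fv_simps gv_simps algebra_simps)

lemma sumS: "k * (\<Sum>m<n. FL k a b (Suc m)) = FL k a b (Suc n) + FL k a b n - FL k a b 1 - FL k a b 0"
  by (induction n) (simp_all add: algebra_simps)

lemma tele: "(\<Sum>m<n. FL k a b (Suc m) * (FL k a b (Suc (Suc m)) - FL k a b m)) = FL k a b n * FL k a b (Suc n) - FL k a b 0 * FL k a b 1"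
  by (induction n) (simp_all add: algebra_simps)

lemma energy:
  assumes k: "k \<noteq> 0" and n: "n \<ge> 1" and e1: "FL k a b n = FL k a b 0" and e2: "FL k a b (Suc n) = FL k a b 1"
  shows "a = 0 \<and> b = 0"
proof -
  have "(\<Sum>m<n. FL k a b (Suc m) * (FL k a b (Suc (Suc m)) - FL k a b m)) = k * (\<Sum>m<n. (FL k a b (Suc m))^2)"
    by (simp add: sum_distrib_left power2_eq_square algebra_simps)
  with tele[of k a b n] e1 e2 k have s0: "(\<Sum>m<n. (FL k a b (Suc m))^2) = 0" by (simp add: algebra_simps)
  have all0: "\<forall>m\<in>{..<n}. (FL k a b (Suc m))^2 = 0"
    using sum_nonneg_eq_0_iff[of "{..<n}" "\<lambda>m. (FL k a b (Suc m))^2"] s0 by simp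
  have "FL k a b 1 = 0" using all0[rule_format, of 0] n by simp
  moreover have "FL k a b n = 0" using all0[rule_format, of "n-1"] n by simp
  ultimately show ?thesis using e1 by simp
qed



definition dd :: "nat \<Rightarrow> nat \<Rightarrow> nat \<Rightarrow> nat" where "dd n i j = (if i \<le> j then j - i else j + n - i)"
definition prv :: "nat \<Rightarrow> nat \<Rightarrow> nat" where "prv n i = (if i = 0 then n - 1 else i - 1)"
definition nxt :: "nat \<Rightarrow> nat \<Rightarrow> nat" where "nxt n i = (if i = n - 1 then 0 else i + 1)"

lemma bracket:
  fixes c :: "nat \<Rightarrow> real"
  assumes n3: "3 \<le> n" and i: "i < n" and j: "j < n"
    and rec: "\<And>m. 1 \<le> m \<Longrightarrow> m + 2 \<le> n \<Longrightarrow> c (m+1) = k * c m + c (m-1)"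
  shows "c (dd n (prv n i) j) - k * c (dd n i j) - c (dd n (nxt n i) j) =
     (if j = i then c 1 - k*c 0 - c (n-1) else if j = prv n i then c 0 - k * c (n-1) - c (n-2) else 0)"
proof (cases "j = i")
  case True
  have "dd n (prv n i) j = 1" "dd n i j = 0" "dd n (nxt n i) j = n - 1"
    using True n3 i by (auto simp: dd_def prv_def nxt_def)
  then show ?thesis using True by simp
next
  case False
  note ji = False
  show ?thesis
  proof (cases "j = prv n i")
    case True
    have "dd n (prv n i) j = 0" "dd n i j = n - 1" "dd n (nxt n i) j = n - 2"
      using True ji n3 i by (auto simp: dd_def prv_def nxt_def)
    then show ?thesis using True ji by simp
  next
    case False
    define m where "m = dd n i j"
    have h: "dd n (prv n i) j = m + 1" "dd n (nxt n i) j = m - 1" "1 \<le> m" "m + 2 \<le> n"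
      using False ji n3 i j unfolding m_def by (auto simp: dd_def prv_def nxt_def split: if_splits)
    show ?thesis using rec[OF h(3,4)] h False ji unfolding m_def[symmetric] by simp
  qed
qed

lemma cyc:
  fixes c x :: "nat \<Rightarrow> real"
  assumes n3: "3 \<le> n" and i: "i < n"
    and rec: "\<And>m. 1 \<le> m \<Longrightarrow> m + 2 \<le> n \<Longrightarrow> c (m+1) = k * c m + c (m-1)"
  shows "(\<Sum>j<n. c (dd n (prv n i) j) * x j) - k * (\<Sum>j<n. c (dd n i j) * x j) - (\<Sum>j<n. c (dd n (nxt n i) j) * x j)
      = (c 1 - k*c 0 - c (n-1)) * x i + (c 0 - k * c (n-1) - c (n-2)) * x (prv n i)"
proof -
  have pi: "prv n i \<noteq> i" "prv n i < n" using n3 i by (auto simp: prv_def)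
  have "(\<Sum>j<n. c (dd n (prv n i) j) * x j) - k * (\<Sum>j<n. c (dd n i j) * x j) - (\<Sum>j<n. c (dd n (nxt n i) j) * x j)
     = (\<Sum>j<n. (c (dd n (prv n i) j) - k * c (dd n i j) - c (dd n (nxt n i) j)) * x j)"
    by (simp add: sum_subtractf sum_distrib_left algebra_simps)
  also have "\<dots> = (\<Sum>j<n. (if j = i then (c 1 - k*c 0 - c (n-1)) * x j else 0) + (if j = prv n i then (c 0 - k * c (n-1) - c (n-2)) * x j else 0))"
    by (rule sum.cong[OF refl], subst bracket[OF n3 i _ rec], auto simp: pi)
  also have "\<dots> = (c 1 - k*c 0 - c (n-1)) * x i + (c 0 - k * c (n-1) - c (n-2)) * x (prv n i)"
    using i pi by (simp add: sum.distrib)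
  finally show ?thesis .
qed

lemma Bmat_entry: "i < n \<Longrightarrow> j < n \<Longrightarrow> Bmat n k a b $$ (i, j) = FL k a b (dd n i j + 1)"
  by (simp add: Bmat_def dd_def add.commute)

lemma Bmat_carrier: "Bmat n k a b \<in> carrier_mat n n"
  by (simp add: Bmat_def)

lemma Bmat_mult: assumes "v \<in> carrier_vec n" "i < n"
  shows "(Bmat n k a b *\<^sub>v v) $ i = (\<Sum>j<n. FL k a b (dd n i j + 1) * v $ j)"
  using assms by (auto simp: Bmat_def scalar_prod_def row_def dd_def lessThan_atLeast0 add.commute intro!: sum.cong)

lemma ker_rel:
  assumes n3: "3 \<le> n" and v: "v \<in> carrier_vec n" and B0: "Bmat n k a b *\<^sub>v v = 0\<^sub>v n" and i: "i < n"
  shows "(FL k a b 0 - FL k a b n) * v $ i + (FL k a b 1 - FL k a b (Suc n)) * v $ (prv n i) = 0"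
proof -
  define c where "c m = FL k a b (m + 1)" for m
  have rec: "c (m+1) = k * c m + c (m-1)" if "1 \<le> m" "m + 2 \<le> n" for m
    using that by (cases m) (auto simp: c_def)
  have y: "(\<Sum>j<n. c (dd n i' j) * v $ j) = 0" if "i' < n" for i'
    using Bmat_mult[OF v that, of k a b] B0 that by (simp add: c_def)
  have pn: "prv n i < n" "nxt n i < n" using i n3 by (auto simp: prv_def nxt_def)
  have "(c 1 - k*c 0 - c (n-1)) * v $ i + (c 0 - k * c (n-1) - c (n-2)) * v $ (prv n i) = 0"
    using cyc[OF n3 i rec, of "\<lambda>j. v $ j"] y[OF pn(1)] y[OF i] y[OF pn(2)] by simp
  moreover have "c 1 - k*c 0 - c (n-1) = FL k a b 0 - FL k a b n"
    using n3 by (simp add: c_def)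
  moreover have "c 0 - k * c (n-1) - c (n-2) = FL k a b 1 - FL k a b (Suc n)"
  proof -
    obtain m where m: "n = Suc (Suc m)" using n3 by (intro that[of "n-2"]) arith
    show ?thesis by (simp add: c_def m)
  qed
  ultimately show ?thesis by simp
qed



lemma odd_pow1: assumes "odd n" "(\<rho>::real)^n = 1" shows "\<rho> = 1"
proof (cases "\<rho> < 0")
  case True
  then have "\<rho>^n < 0" using assms(1) by simp
  then show ?thesis using assms(2) by simp
next
  case False
  have "n > 0" using assms(1) by (cases n) auto
  then show ?thesis using power_eq_iff_eq_base[of n \<rho> 1] False assms(2) by simp
qed

lemma K1:
  fixes x :: "nat \<Rightarrow> real"
  assumes odd: "odd n" and n3: "3 \<le> n"
    and rel: "\<And>i. i < n \<Longrightarrow> \<beta> * x i + \<alpha> * x (prv n i) = 0"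
    and ab: "\<alpha> + \<beta> \<noteq> 0" "\<alpha> \<noteq> 0 \<or> \<beta> \<noteq> 0"
    and j: "j < n" shows "x j = 0"
proof (cases "\<beta> = 0")
  case True
  then have a: "\<alpha> \<noteq> 0" using ab by simp
  have "nxt n j < n" "prv n (nxt n j) = j" using j n3 by (auto simp: prv_def nxt_def)
  then show ?thesis using rel[of "nxt n j"] True a by simp
next
  case False
  define \<rho> where "\<rho> = - \<alpha> / \<beta>"
  have step: "x i = \<rho> * x (prv n i)" if "i < n" for i
    using rel[OF that] False unfolding \<rho>_def by (simp add: field_simps)
  have pw: "i < n \<Longrightarrow> x i = \<rho>^i * x 0" for i
  proof (induction i)
    case (Suc i)
    then show ?case using step[OF Suc.prems] by (simp add: prv_def)
  qed simp
  have "x 0 = \<rho> * x (n - 1)" using step[of 0] n3 by (simp add: prv_def)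
  also have "\<dots> = \<rho> * \<rho>^(n-1) * x 0" using pw[of "n-1"] n3 by simp
  also have "\<rho> * \<rho>^(n-1) = \<rho>^n" using n3 by (metis Suc_diff_1 le_trans numeral_3_eq_3 power_Suc zero_less_Suc less_le_trans Suc_le_lessD)
  finally have x0: "x 0 = \<rho>^n * x 0" .
  show ?thesis
  proof (cases "x 0 = 0")
    case True
    then show ?thesis using pw[OF j] by simp
  next
    case x0ne: False
    then have "\<rho>^n = 1" using x0 by simp
    then have "\<rho> = 1" using odd_pow1[OF odd] by simp
    then have "\<alpha> + \<beta> = 0" using False unfolding \<rho>_def by (simp add: field_simps)
    then show ?thesis using ab by simp
  qed
qed

lemma K2:
  fixes x :: "nat \<Rightarrow> real"
  assumes n3: "3 \<le> n"
    and rel: "\<And>i. i < n \<Longrightarrow> \<beta> * x i + \<alpha> * x (prv n i) = 0"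
    and a: "\<alpha> \<noteq> 0" and b: "\<beta> = - \<alpha>"
  shows "j < n \<Longrightarrow> x j = x 0"
proof (induction j)
  case (Suc j)
  have "x (Suc j) = x j" using rel[OF Suc.prems] a b by (simp add: prv_def)
  then show ?case using Suc by simp
qed simp

lemma rowsum: assumes "i < n" shows "(\<Sum>j<n. FL k a b (dd n i j + 1)) = (\<Sum>m<n. FL k a b (Suc m))"
  by (rule sum.reindex_bij_witness[where j = "\<lambda>j. dd n i j" and i = "\<lambda>m. if m + i < n then m + i else m + i - n"])
     (use assms in \<open>auto simp: dd_def\<close>)

lemma Bmat_ones:
  assumes "(\<Sum>m<n. FL k a b (Suc m)) = 0"
  shows "Bmat n k a b *\<^sub>v vec n (\<lambda>_. 1) = 0\<^sub>v n"
proof (rule eq_vecI)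
  fix i assume "i < dim_vec (0\<^sub>v n :: real vec)"
  then have i: "i < n" by simp
  show "(Bmat n k a b *\<^sub>v vec n (\<lambda>_. 1)) $ i = 0\<^sub>v n $ i"
    using Bmat_mult[of "vec n (\<lambda>_. 1)" n i k a b] i rowsum[OF i, of k a b] assms by simp
qed (simp add: Bmat_def)

lemma mrank_B: "mrank (Bmat n k a b) = vec_space.rank n (Bmat n k a b)"
  by (simp add: mrank_def Bmat_def)

lemma rank_le_iff: "mrank (Bmat n k a b) \<le> n - 1 \<longleftrightarrow> det (Bmat n k a b) = 0" if "n \<ge> 1"
proof -
  have "vec_space.rank n (Bmat n k a b) \<le> n"
    using vec_space.rank_le_nc[OF Bmat_carrier] by blast
  moreover have "det (Bmat n k a b) \<noteq> 0 \<longleftrightarrow> vec_space.rank n (Bmat n k a b) = n"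
    using vec_space.det_rank_iff[OF Bmat_carrier] by blast
  ultimately show ?thesis using that unfolding mrank_B by linarith
qed

lemma rank_ge:
  fixes B :: "real mat"
  assumes B: "B \<in> carrier_mat n n" and n: "n \<ge> 1"
  and ker: "\<And>v. v \<in> carrier_vec n \<Longrightarrow> B *\<^sub>v v = 0\<^sub>v n \<Longrightarrow> v $ (n-1) = 0 \<Longrightarrow> v = 0\<^sub>v n"
  shows "n - 1 \<le> vec_space.rank n B"
proof -
  interpret vs: vec_space "TYPE(real)" n .
  define A where "A = mat n (n-1) (\<lambda>(i,j). B $$ (i,j))"
  have A: "A \<in> carrier_mat n (n-1)" by (simp add: A_def)
  have ext: "A *\<^sub>v w = B *\<^sub>v (vec n (\<lambda>j. if j < n-1 then w$j else 0))" if w: "w \<in> carrier_vec (n-1)" for w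
  proof (rule eq_vecI)
    fix i assume "i < dim_vec (B *\<^sub>v vec n (\<lambda>j. if j < n - 1 then w $ j else 0))"
    then have i: "i < n" using B by simp
    have nn: "n = Suc (n-1)" using n by simp
    have "(B *\<^sub>v vec n (\<lambda>j. if j < n - 1 then w $ j else 0)) $ i = (\<Sum>j<n. B $$ (i,j) * (if j < n - 1 then w $ j else 0))"
      using i B by (simp add: scalar_prod_def row_def lessThan_atLeast0)
    also have "\<dots> = (\<Sum>j<n-1. B $$ (i,j) * w $ j)"
      by (subst nn, subst sum.lessThan_Suc) (simp add: nn[symmetric])
    also have "\<dots> = (A *\<^sub>v w) $ i"
      using i w by (simp add: A_def scalar_prod_def row_def lessThan_atLeast0)
    finally show "(A *\<^sub>v w) $ i = (B *\<^sub>v vec n (\<lambda>j. if j < n - 1 then w $ j else 0)) $ i" by simp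
  qed (use B in \<open>simp add: A_def\<close>)
  have inj: "w = 0\<^sub>v (n-1)" if w: "w \<in> carrier_vec (n-1)" and Aw: "A *\<^sub>v w = 0\<^sub>v n" for w
  proof -
    let ?v = "vec n (\<lambda>j. if j < n-1 then w$j else 0)"
    have "?v = 0\<^sub>v n" using ker[of ?v] ext[OF w] Aw n by simp
    then have "?v $ j = 0" if "j < n - 1" for j using that by simp
    then show ?thesis using w by (intro eq_vecI) auto
  qed
  have dist: "distinct (cols A)"
  proof (subst distinct_conv_nth, intro allI impI)
    fix j1 j2 assume j1: "j1 < length (cols A)" and j2: "j2 < length (cols A)" and ne: "j1 \<noteq> j2"
    show "cols A ! j1 \<noteq> cols A ! j2"
    proof
      assume eq: "cols A ! j1 = cols A ! j2"
      have j1': "j1 < n - 1" and j2': "j2 < n - 1" using j1 j2 A by auto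
      have eqe: "A $$ (i, j1) = A $$ (i, j2)" if "i < n" for i
        using arg_cong[OF eq, of "\<lambda>v. v $ i"] that j1' j2' A by simp
      define w :: "real vec" where "w = vec (n-1) (\<lambda>j. if j = j1 then 1 else if j = j2 then -1 else 0)"
      have w: "w \<in> carrier_vec (n-1)" by (simp add: w_def)
      have "A *\<^sub>v w = 0\<^sub>v n"
      proof (rule eq_vecI)
        fix i assume "i < dim_vec (0\<^sub>v n :: real vec)"
        then have i: "i < n" by simp
        have "(A *\<^sub>v w) $ i = (\<Sum>j<n-1. A $$ (i,j) * (if j = j1 then 1 else if j = j2 then -1 else 0))"
          using i A by (simp add: scalar_prod_def row_def lessThan_atLeast0 w_def)
        also have "\<dots> = (\<Sum>j<n-1. (if j = j1 then A $$ (i,j) else 0) - (if j = j2 then A $$ (i,j) else 0))"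
          by (rule sum.cong) (use ne in auto)
        also have "\<dots> = A $$ (i, j1) - A $$ (i, j2)" using j1' j2' by (simp add: sum_subtractf)
        finally show "(A *\<^sub>v w) $ i = 0\<^sub>v n $ i" using eqe[OF i] i by simp
      qed (use A in simp)
      then have "w = 0\<^sub>v (n-1)" using inj[OF w] by simp
      then have "w $ j1 = 0" using j1' by simp
      then show False using j1' by (simp add: w_def)
    qed
  qed
  have indep: "vs.lin_indpt (set (cols A))"
  proof
    assume "vs.lin_dep (set (cols A))"
    then obtain w where "w \<in> carrier_vec (n-1)" "w \<noteq> 0\<^sub>v (n-1)" "A *\<^sub>v w = 0\<^sub>v n"
      using vs.lin_depE[OF A _ dist] by blast
    then show False using inj by blast
  qed
  have sub: "set (cols A) \<subseteq> set (cols B)"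
  proof
    fix c assume "c \<in> set (cols A)"
    then obtain j where j: "j < n - 1" and c: "c = col A j" using A by (auto simp: in_set_conv_nth)
    have "col A j = col B j" using A B j by (intro eq_vecI) (auto simp: A_def)
    moreover have "col B j \<in> set (cols B)" using B j by (auto simp: in_set_conv_nth intro!: exI[of _ j])
    ultimately show "c \<in> set (cols B)" using c by simp
  qed
  have "card (set (cols A)) \<le> vs.rank B" by (rule vs.rank_ge_card_indpt[OF B sub indep])
  moreover have "card (set (cols A)) = n - 1" using distinct_card[OF dist] A by simp
  ultimately show ?thesis by simp
qed



lemma triple:
  assumes odd: "odd n" and n3: "3 \<le> n" and k: "k \<noteq> 0" and ab: "\<not> (a = 0 \<and> b = 0)"
  shows "det (Bmat n k a b) = 0 \<longleftrightarrow> a * (Pv n k - 1) + b * (Qv n k - k - 2) = 0"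
    and "a * (Pv n k - 1) + b * (Qv n k - k - 2) = 0 \<Longrightarrow> mrank (Bmat n k a b) = n - 1"
proof -
  define \<alpha> where "\<alpha> = FL k a b 1 - FL k a b (Suc n)"
  define \<beta> where "\<beta> = FL k a b 0 - FL k a b n"
  have lin: "a * (Pv n k - 1) + b * (Qv n k - k - 2) = - (\<alpha> + \<beta>)"
    unfolding key_lin \<alpha>_def \<beta>_def by simp
  have ne: "\<alpha> \<noteq> 0 \<or> \<beta> \<noteq> 0"
    using energy[OF k, of n a b] n3 ab unfolding \<alpha>_def \<beta>_def by auto
  have rel: "\<beta> * v $ i + \<alpha> * v $ (prv n i) = 0"
    if "v \<in> carrier_vec n" "Bmat n k a b *\<^sub>v v = 0\<^sub>v n" "i < n" for v i
    using ker_rel[OF n3 that] unfolding \<alpha>_def \<beta>_def by simp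
  have B: "Bmat n k a b \<in> carrier_mat n n" by (rule Bmat_carrier)
  show M1: "det (Bmat n k a b) = 0 \<longleftrightarrow> a * (Pv n k - 1) + b * (Qv n k - k - 2) = 0"
  proof
    assume "det (Bmat n k a b) = 0"
    then obtain v where v: "v \<in> carrier_vec n" "v \<noteq> 0\<^sub>v n" "Bmat n k a b *\<^sub>v v = 0\<^sub>v n"
      using det_0_iff_vec_prod_zero_field[OF B] by blast
    show "a * (Pv n k - 1) + b * (Qv n k - k - 2) = 0"
    proof (rule ccontr)
      assume "a * (Pv n k - 1) + b * (Qv n k - k - 2) \<noteq> 0"
      then have ab0: "\<alpha> + \<beta> \<noteq> 0" using lin by simp
      have "v $ j = 0" if "j < n" for j
        using K1[of n \<beta> "\<lambda>i. v $ i" \<alpha> j, OF odd n3 rel[OF v(1) v(3)] ab0 ne that] by simp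
      then have "v = 0\<^sub>v n" using v(1) by (intro eq_vecI) auto
      then show False using v(2) by simp
    qed
  next
    assume "a * (Pv n k - 1) + b * (Qv n k - k - 2) = 0"
    then have "k * (\<Sum>m<n. FL k a b (Suc m)) = 0" using sumS[of k a b n] key_lin[of a n k b] by simp
    then have "(\<Sum>m<n. FL k a b (Suc m)) = 0" using k by simp
    then have "Bmat n k a b *\<^sub>v vec n (\<lambda>_. 1) = 0\<^sub>v n" by (rule Bmat_ones)
    moreover have "vec n (\<lambda>_. 1) \<noteq> (0\<^sub>v n :: real vec)"
    proof
      assume "vec n (\<lambda>_. 1) = (0\<^sub>v n :: real vec)"
      then have "vec n (\<lambda>_. 1) $ 0 = (0\<^sub>v n :: real vec) $ 0" by simp
      then show False using n3 by simp
    qed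
    ultimately show "det (Bmat n k a b) = 0"
      using det_0_iff_vec_prod_zero_field[OF B] vec_carrier[of n "\<lambda>_. (1::real)"] by blast
  qed
  assume h: "a * (Pv n k - 1) + b * (Qv n k - k - 2) = 0"
  then have s: "\<beta> = - \<alpha>" using lin by simp
  then have a0: "\<alpha> \<noteq> 0" using ne by auto
  have "n - 1 \<le> vec_space.rank n (Bmat n k a b)"
  proof (rule rank_ge[OF B])
    fix v :: "real vec" assume v: "v \<in> carrier_vec n" "Bmat n k a b *\<^sub>v v = 0\<^sub>v n" "v $ (n - 1) = 0"
    have c: "v $ j = v $ 0" if "j < n" for j
      using K2[of n \<beta> "\<lambda>i. v $ i" \<alpha> j, OF n3 rel[OF v(1) v(2)] a0 s that] by simp
    have "v $ 0 = 0" using c[of "n-1"] v(3) n3 by simp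
    then show "v = 0\<^sub>v n" using c v(1) by (intro eq_vecI) auto
  qed (use n3 in simp)
  moreover have "mrank (Bmat n k a b) \<le> n - 1" using rank_le_iff[of n k a b] M1 h n3 by simp
  ultimately show "mrank (Bmat n k a b) = n - 1" unfolding mrank_B by simp
qed

lemma alg1:
  fixes a b p q :: real
  assumes p: "p \<noteq> 0" and q: "q \<noteq> 0" and s: "4 * a^3 + 27 * b^2 = 0" and ab: "\<not> (a = 0 \<and> b = 0)"
    and l: "a * p + b * q = 0"
  shows "a = - (27 * p^2) / (4 * q^2) \<and> b = (27 * p^3) / (4 * q^3)"
proof -
  have bq: "b = - a * p / q" using l q by (simp add: field_simps)
  have a0: "a \<noteq> 0" using ab bq by auto
  have "a^2 * (4 * a + 27 * p^2 / q^2) = 0" using s unfolding bq by (simp add: field_simps power2_eq_square power3_eq_cube)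
  then have "4 * a + 27 * p^2 / q^2 = 0" using a0 by simp
  then have A: "a = - (27 * p^2) / (4 * q^2)" by (simp add: field_simps)
  have "b = (27 * p^3) / (4 * q^3)" unfolding bq A using q by (simp add: field_simps power2_eq_square power3_eq_cube)
  then show ?thesis using A by simp
qed

lemma alg2:
  fixes p q :: real
  assumes p: "p \<noteq> 0" and q: "q \<noteq> 0"
  defines "a \<equiv> - (27 * p^2) / (4 * q^2)" and "b \<equiv> (27 * p^3) / (4 * q^3)"
  shows "4 * a^3 + 27 * b^2 = 0" "a \<noteq> 0" "a * p + b * q = 0"
  using p q unfolding a_def b_def by (simp_all add: field_simps power2_eq_square power3_eq_cube)

theorem theorem4p13:
  fixes n :: nat
  assumes "odd n" and "n \<ge> 3"
  shows "Tset n (n - 1) = {(k, a3 n k, b3 n k) | k. k \<notin> Cset n}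
    \<and> finite {(k, a, b) \<in> Tset n (n - 1). mrank (Bmat n k a b) \<noteq> n - 1}
    \<and> (\<forall>r. 1 \<le> r \<and> r \<le> n - 2 \<longrightarrow>
           finite {(k, a, b) \<in> Tset n (n - 1). mrank (Bmat n k a b) = r})"
proof -
  note odd = assms(1) and n3 = assms(2)
  have mem: "(k, a, b) \<in> Tset n (n - 1) \<longleftrightarrow> k \<notin> Cset n \<and> a = a3 n k \<and> b = b3 n k" for k a b
  proof
    assume "(k, a, b) \<in> Tset n (n - 1)"
    then have kC: "k \<notin> Cset n" and k: "k \<noteq> 0" and r: "mrank (Bmat n k a b) \<le> n - 1"
      and s: "4 * a^3 + 27 * b^2 = 0" and ab: "\<not> (a = 0 \<and> b = 0)"
      unfolding Tset_def by auto
    have "det (Bmat n k a b) = 0" using rank_le_iff[of n k a b] r n3 by simp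
    then have l: "a * (Pv n k - 1) + b * (Qv n k - k - 2) = 0" using triple(1)[OF odd n3 k ab] by simp
    have p: "Pv n k - 1 \<noteq> 0" and q: "Qv n k - k - 2 \<noteq> 0" using kC by (auto simp: Cset_def)
    show "k \<notin> Cset n \<and> a = a3 n k \<and> b = b3 n k"
      using alg1[OF p q s ab l] kC unfolding a3_def b3_def by simp
  next
    assume h: "k \<notin> Cset n \<and> a = a3 n k \<and> b = b3 n k"
    have p: "Pv n k - 1 \<noteq> 0" and q: "Qv n k - k - 2 \<noteq> 0" using h by (auto simp: Cset_def)
    have k: "k \<noteq> 0" using h zero_in_C[of n] by auto
    note g = alg2[OF p q]
    have s: "4 * a^3 + 27 * b^2 = 0" and a0: "a \<noteq> 0"
      and l: "a * (Pv n k - 1) + b * (Qv n k - k - 2) = 0"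
      using g h unfolding a3_def b3_def by auto
    have "det (Bmat n k a b) = 0" using triple(1)[OF odd n3 k] a0 l by simp
    then have "mrank (Bmat n k a b) \<le> n - 1" using rank_le_iff[of n k a b] n3 by simp
    then show "(k, a, b) \<in> Tset n (n - 1)" using h k s a0 unfolding Tset_def by auto
  qed
  have rk: "mrank (Bmat n k a b) = n - 1" if "(k, a, b) \<in> Tset n (n - 1)" for k a b
  proof -
    from that have kC: "k \<notin> Cset n" and k: "k \<noteq> 0" and r: "mrank (Bmat n k a b) \<le> n - 1"
      and ab: "\<not> (a = 0 \<and> b = 0)"
      unfolding Tset_def by auto
    have "det (Bmat n k a b) = 0" using rank_le_iff[of n k a b] r n3 by simp
    then have l: "a * (Pv n k - 1) + b * (Qv n k - k - 2) = 0" using triple(1)[OF odd n3 k ab] by simp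
    show ?thesis using triple(2)[OF odd n3 k ab l] .
  qed
  have A: "Tset n (n - 1) = {(k, a3 n k, b3 n k) | k. k \<notin> Cset n}"
    using mem by auto
  have B: "{(k, a, b) \<in> Tset n (n - 1). mrank (Bmat n k a b) \<noteq> n - 1} = {}"
    using rk by auto
  have C: "{(k, a, b) \<in> Tset n (n - 1). mrank (Bmat n k a b) = r} = {}" if "r \<le> n - 2" for r
    using rk that n3 by force
  show ?thesis
  proof (intro conjI allI impI)
    show "Tset n (n - 1) = {(k, a3 n k, b3 n k) | k. k \<notin> Cset n}" by (rule A)
    show "finite {(k, a, b) \<in> Tset n (n - 1). mrank (Bmat n k a b) \<noteq> n - 1}" unfolding B by simp
    fix r :: nat assume "1 \<le> r \<and> r \<le> n - 2"
    then have "r \<le> n - 2" by simp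
    then show "finite {(k, a, b) \<in> Tset n (n - 1). mrank (Bmat n k a b) = r}" by (subst C) simp_all
  qed
qed


end
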